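(* Let $n_\text{S}, n_\text{R}\ge 1$ be integers and let $\gamma_\text{S}>0$ and $\lambda_1^G>0$ be real numbers. Let $Y$ be an Erlang random variable with shape and rate parameters both equal to $n_\text{S}$, i.e. with density $f_Y(y)=\frac{n_\text{S}^{n_\text{S}}}{(n_\text{S}-1)!}y^{n_\text{S}-1}e^{-n_\text{S}y}$ for $y>0$, and let $X_1$ be an exponential random variable with unit mean, independent of $Y$. Put $V=n_\text{R}\lambda_1^G X_1$ and $$\gamma_{\text{D}}=\gamma_\text{S}\,Y\,n_\text{R}\frac{V}{1+V}.$$ Then for every $x>0$, writing $w=\frac{x}{n_\text{R}\gamma_\text{S}}$, $$\mathbb{P}(\gamma_\text{D}\le x)=1-2(n_\text{S}w)^{n_\text{S}}e^{-n_\text{S}w}\sum_{m=0}^{n_\text{S}-1}\frac{(\lambda_1^G n_\text{S}n_\text{R}w)^{-(m+1)/2}}{m!\,(n_\text{S}-m-1)!}\,\mathrm{K}_{m+1}\!\left(2\sqrt{\frac{n_\text{S}w}{\lambda_1^G n_\text{R}}}\right),$$ where $\mathrm{K}_\nu$ denotes the modified Bessel function of the second kind of order $\nu$.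
   Context: This is the distribution of the received SNR $\gamma_\text{D}$ at the single-antenna destination of a dual-hop amplify-and-forward relay system (source with $n_\text{S}$ antennas, relay with $n_\text{R}$ antennas, Rayleigh fading) when the relay antennas are fully correlated (correlation matrix equal to the all-ones $n_\text{R}\times n_\text{R}$ matrix, so its only nonzero eigenvalue is $n_\text{R}$); $\gamma_\text{S}$ is the source transmit SNR and $\lambda_1^G$ is the relay gain allocated to the single nonzero eigenmode. The claim as stated is purely about the random variables defined in it. *)

theory Defs
  imports "HOL-Probability.Probability"
begin

text \<open>Modified Bessel function of the second kind of order nu, for real argument z > 0,
  via the standard integral representation (DLMF 10.32.9):
  K_nu(z) = integral over t in [0, infinity) of exp(-z cosh t) cosh(nu t).\<close>
definition besselK :: "real \<Rightarrow> real \<Rightarrow> real" where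
  "besselK nu z = (LBINT t:{0..}. exp (- z * cosh t) * cosh (nu * t))"

end

theory Submission
  imports Defs
begin

lemma exp_subst_nn:
  fixes f :: "real \<Rightarrow> ennreal"
  assumes Mf[measurable]: "f \<in> borel_measurable borel"
  shows "(\<integral>\<^sup>+t. f t * indicator {0<..} t \<partial>lborel) = (\<integral>\<^sup>+s. f (exp s) * ennreal (exp s) \<partial>lborel)"
proof -
  define A where "A = (\<lambda>i::nat. \<lambda>t. f t * indicator {exp (- real (Suc i))..exp (real (Suc i))} t)"
  define B where "B = (\<lambda>i::nat. \<lambda>s. f (exp s) * ennreal (exp s) * indicator {- real (Suc i)..real (Suc i)} s)"
  have eq: "integral\<^sup>N lborel (A i) = integral\<^sup>N lborel (B i)" for i
    unfolding A_def B_def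
    by (rule nn_integral_substitution_aux[where g=exp and g'=exp and a="- real (Suc i)" and b="real (Suc i)"])
       (auto intro!: derivative_eq_intros continuous_intros)
  have incA: "incseq A"
    unfolding A_def incseq_def le_fun_def
  proof (intro allI impI)
    fix m n :: nat and x :: real assume "m \<le> n"
    then have e: "exp(-real(Suc n)) \<le> exp(-real(Suc m))" "exp(real(Suc m)) \<le> exp (real (Suc n))" by auto
    show "f x * indicator {exp (- real (Suc m))..exp (real (Suc m))} x
         \<le> f x * indicator {exp (- real (Suc n))..exp (real (Suc n))} x"
      by (intro mult_left_mono) (auto simp del: of_nat_Suc exp_le_cancel_iff simp: indicator_def intro: order_trans[OF e(1)] order_trans[OF _ e(2)])
  qed
  have incB: "incseq B"
    unfolding B_def incseq_def le_fun_def
    by (auto intro!: mult_left_mono split: split_indicator)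
  have supA: "(SUP i. A i t) = f t * indicator {0<..} t" for t
  proof (cases "t > 0")
    case True
    obtain n :: nat where n: "\<bar>ln t\<bar> \<le> real n" using real_arch_simple by blast
    have "A n t = f t"
    proof -
      have "exp (- real (Suc n)) \<le> t"
        using n True by (metis abs_le_D2 exp_le_cancel_iff exp_ln le_less_trans lessI less_imp_le minus_le_iff of_nat_less_iff order.trans)
      moreover have "t \<le> exp (real (Suc n))"
        using n True by (metis abs_le_D1 exp_le_cancel_iff exp_ln lessI less_imp_le of_nat_less_iff order.trans)
      ultimately show ?thesis unfolding A_def by simp
    qed
    moreover have "A i t \<le> f t" for i unfolding A_def by (auto split: split_indicator)
    ultimately have "(SUP i. A i t) = f t"
      by (intro antisym SUP_least) (auto intro: SUP_upper2[where i=n])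
    then show ?thesis using True by simp
  next
    case False
    then have "A i t = 0" for i unfolding A_def
      by (auto split: split_indicator) (meson exp_gt_zero leD order.strict_trans2)
    then show ?thesis using False by simp
  qed
  have supB: "(SUP i. B i s) = f (exp s) * ennreal (exp s)" for s
  proof -
    obtain n :: nat where n: "\<bar>s\<bar> \<le> real n" using real_arch_simple by blast
    have "B n s = f (exp s) * ennreal (exp s)" unfolding B_def using n by (auto simp: indicator_def)
    moreover have "B i s \<le> f (exp s) * ennreal (exp s)" for i unfolding B_def by (auto split: split_indicator)
    ultimately show ?thesis
      by (intro antisym SUP_least) (auto intro: SUP_upper2[where i=n])
  qed
  have "(\<integral>\<^sup>+t. f t * indicator {0<..} t \<partial>lborel) = (\<integral>\<^sup>+t. (SUP i. A i t) \<partial>lborel)"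
    by (simp add: supA)
  also have "\<dots> = (SUP i. integral\<^sup>N lborel (A i))"
    by (rule nn_integral_monotone_convergence_SUP[OF incA]) (simp add: A_def)
  also have "\<dots> = (SUP i. integral\<^sup>N lborel (B i))" by (simp add: eq)
  also have "\<dots> = (\<integral>\<^sup>+t. (SUP i. B i t) \<partial>lborel)"
    by (rule nn_integral_monotone_convergence_SUP[OF incB, symmetric]) (simp add: B_def)
  also have "\<dots> = (\<integral>\<^sup>+s. f (exp s) * ennreal (exp s) \<partial>lborel)" by (simp add: supB)
  finally show ?thesis .
qed

lemma borel_measurable_cosh[measurable]: "(cosh :: real \<Rightarrow> real) \<in> borel_measurable borel"
  by (intro borel_measurable_continuous_onI continuous_intros)

lemma nn_integral_symm:
  fixes h :: "real \<Rightarrow> real"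
  assumes [measurable]: "h \<in> borel_measurable borel" and nn: "\<And>u. h u \<ge> 0"
  shows "(\<integral>\<^sup>+u. ennreal (h u) \<partial>lborel) = (\<integral>\<^sup>+u. ennreal (h u + h (-u)) * indicator {0..} u \<partial>lborel)"
proof -
  have "(\<integral>\<^sup>+u. ennreal (h u) \<partial>lborel) = (\<integral>\<^sup>+u. ennreal (h u) * indicator {0<..} u + ennreal (h u) * indicator {..0} u \<partial>lborel)"
    by (intro nn_integral_cong) (auto simp: indicator_def)
  also have "\<dots> = (\<integral>\<^sup>+u. ennreal (h u) * indicator {0<..} u \<partial>lborel) + (\<integral>\<^sup>+u. ennreal (h u) * indicator {..0} u \<partial>lborel)"
    by (intro nn_integral_add) auto
  also have "(\<integral>\<^sup>+u. ennreal (h u) * indicator {0<..} u \<partial>lborel) = (\<integral>\<^sup>+u. ennreal (h u) * indicator {0..} u \<partial>lborel)"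
    by (intro nn_integral_cong_AE) (use AE_lborel_singleton[of 0] in \<open>auto simp: indicator_def\<close>)
  also have "(\<integral>\<^sup>+u. ennreal (h u) * indicator {..0} u \<partial>lborel) = (\<integral>\<^sup>+u. ennreal (h (0 + (-1) * u)) * indicator {..0} (0 + (-1) * u) \<partial>lborel)"
    using nn_integral_real_affine[where c="-1" and t=0 and f="\<lambda>u. ennreal (h u) * indicator {..0} u"] by simp
  also have "\<dots> = (\<integral>\<^sup>+u. ennreal (h (-u)) * indicator {0..} u \<partial>lborel)"
    by (intro nn_integral_cong) (auto simp: indicator_def)
  also have "(\<integral>\<^sup>+u. ennreal (h u) * indicator {0..} u \<partial>lborel) + (\<integral>\<^sup>+u. ennreal (h (-u)) * indicator {0..} u \<partial>lborel)
     = (\<integral>\<^sup>+u. ennreal (h u) * indicator {0..} u + ennreal (h (-u)) * indicator {0..} u \<partial>lborel)"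
    by (intro nn_integral_add[symmetric]) auto
  also have "\<dots> = (\<integral>\<^sup>+u. ennreal (h u + h (-u)) * indicator {0..} u \<partial>lborel)"
    by (intro nn_integral_cong) (auto simp: indicator_def nn ennreal_plus)
  finally show ?thesis .
qed

lemma bessel_nn:
  fixes b :: real and k :: nat
  assumes b: "b > 0"
  shows "(\<integral>\<^sup>+t. ennreal (t^k * exp (-t - b/t)) * indicator {0<..} t \<partial>lborel)
     = ennreal (2 * sqrt b ^ (k+1)) * (\<integral>\<^sup>+s. ennreal (exp (- (2 * sqrt b) * cosh s) * cosh ((real k + 1) * s)) * indicator {0..} s \<partial>lborel)"
proof -
  define z where "z = 2 * sqrt b"
  define q where "q = sqrt b"
  have q: "q > 0" using b by (simp add: q_def)
  have bq: "b = q * q" using b by (simp add: q_def)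
  define h where "h = (\<lambda>u. exp ((real k + 1) * u) * exp (- z * cosh u))"
  have [measurable]: "h \<in> borel_measurable borel" unfolding h_def by measurable
  have "(\<integral>\<^sup>+t. ennreal (t^k * exp (-t - b/t)) * indicator {0<..} t \<partial>lborel)
      = (\<integral>\<^sup>+s. ennreal (exp s ^k * exp (-exp s - b/exp s)) * ennreal (exp s) \<partial>lborel)"
    by (rule exp_subst_nn) measurable
  also have "\<dots> = (\<integral>\<^sup>+u. ennreal (exp (ln q + 1 * u) ^k * exp (-exp (ln q + 1 * u) - b/exp (ln q + 1 * u))) * ennreal (exp (ln q + 1 * u)) \<partial>lborel)"
    using nn_integral_real_affine[where c=1 and t="ln q" and f="\<lambda>s. ennreal (exp s ^k * exp (-exp s - b/exp s)) * ennreal (exp s)"]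
    by simp
  also have "\<dots> = (\<integral>\<^sup>+u. ennreal (q ^ (k+1)) * ennreal (h u) \<partial>lborel)"
  proof (intro nn_integral_cong)
    fix u :: real
    have e: "exp (ln q + 1 * u) = q * exp u" using q by (simp add: exp_add)
    have c: "- z * cosh u = - (q * exp u) - b / (q * exp u)"
      unfolding z_def cosh_def q_def[symmetric] bq using q
      by (simp add: exp_minus field_simps)
    have "exp (ln q + 1 * u) ^k * exp (-exp (ln q + 1 * u) - b/exp (ln q + 1 * u)) * exp (ln q + 1 * u) = q ^ (k+1) * h u"
      unfolding e h_def c
      by (simp add: power_mult_distrib exp_of_nat_mult[symmetric] algebra_simps flip: exp_add)
    then show "ennreal (exp (ln q + 1 * u) ^k * exp (-exp (ln q + 1 * u) - b/exp (ln q + 1 * u))) * ennreal (exp (ln q + 1 * u)) = ennreal (q ^ (k+1)) * ennreal (h u)"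
      using q by (simp add: ennreal_mult'' [symmetric] ennreal_mult[symmetric] h_def)
  qed
  also have "\<dots> = ennreal (q ^ (k+1)) * (\<integral>\<^sup>+u. ennreal (h u) \<partial>lborel)"
    by (rule nn_integral_cmult) measurable
  also have "(\<integral>\<^sup>+u. ennreal (h u) \<partial>lborel) = (\<integral>\<^sup>+u. ennreal (h u + h (-u)) * indicator {0..} u \<partial>lborel)"
    by (rule nn_integral_symm) (auto simp: h_def)
  also have "\<dots> = (\<integral>\<^sup>+u. ennreal 2 * (ennreal (exp (- z * cosh u) * cosh ((real k + 1) * u)) * indicator {0..} u) \<partial>lborel)"
  proof (intro nn_integral_cong)
    fix u :: real
    have "h u + h (-u) = 2 * (exp (- z * cosh u) * cosh ((real k + 1) * u))"
      unfolding h_def cosh_def by (simp add: algebra_simps)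
    then show "ennreal (h u + h (-u)) * indicator {0..} u = ennreal 2 * (ennreal (exp (- z * cosh u) * cosh ((real k + 1) * u)) * indicator {0..} u)"
      by (simp add: ennreal_mult'' mult.assoc)
  qed
  also have "\<dots> = ennreal 2 * (\<integral>\<^sup>+u. ennreal (exp (- z * cosh u) * cosh ((real k + 1) * u)) * indicator {0..} u \<partial>lborel)"
    by (rule nn_integral_cmult) (simp add: z_def)
  finally have eq: "(\<integral>\<^sup>+t. ennreal (t^k * exp (-t - b/t)) * indicator {0<..} t \<partial>lborel) = ennreal (q ^ (k + 1)) *
    (ennreal 2 * (\<integral>\<^sup>+u. ennreal (exp (- z * cosh u) * cosh ((real k + 1) * u)) * indicator {0..} u \<partial>lborel))" .
  have e2: "ennreal (2 * sqrt b ^ (k+1)) = ennreal 2 * ennreal (sqrt b ^ (k + 1))"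
    using b by (intro ennreal_mult) auto
  show ?thesis
    unfolding eq e2 by (simp only: mult_ac z_def q_def)
qed

lemma exp_tail_nn:
  fixes T :: real assumes T: "T \<ge> 0"
  shows "(\<integral>\<^sup>+t. ennreal (if t > 0 then exp (- t) else 0) * indicator {T<..} t \<partial>lborel) = ennreal (exp (- T))"
proof -
  have lim0: "((\<lambda>t. exp (- t)) \<longlongrightarrow> (0::real)) at_top"
    using filterlim_compose[OF exp_at_bot filterlim_uminus_at_bot_at_top] by simp
  have lim: "((\<lambda>t. - exp (- t)) \<longlongrightarrow> (0::real)) at_top"
    using tendsto_minus[OF lim0] by simp
  have "(\<integral>\<^sup>+t. ennreal (if t > 0 then exp (- t) else 0) * indicator {T<..} t \<partial>lborel)
      = (\<integral>\<^sup>+t. ennreal (exp (- t)) * indicator {T..} t \<partial>lborel)"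
    by (intro nn_integral_cong_AE) (use AE_lborel_singleton[of T] T in \<open>auto simp: indicator_def\<close>)
  also have "\<dots> = ennreal (0 - (- exp (- T)))"
    by (rule nn_integral_FTC_atLeast[where F="\<lambda>t. - exp (- t)", OF _ _ _ lim])
       (auto intro!: derivative_eq_intros)
  finally show ?thesis by simp
qed

lemma cond_equiv:
  fixes y t w c :: real
  assumes t: "t > 0" and w: "w > 0" and c: "c > 0"
  shows "(w < y * (c * t / (1 + c * t))) \<longleftrightarrow> (w < y \<and> w / (c * (y - w)) < t)"
proof -
  have ct: "c * t > 0" using t c by simp
  have "(w < y * (c * t / (1 + c * t))) \<longleftrightarrow> w * (1 + c * t) < y * (c * t)"
    using ct by (simp add: field_simps)
  also have "\<dots> \<longleftrightarrow> w < (y - w) * (c * t)" by (simp add: algebra_simps)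
  also have "\<dots> \<longleftrightarrow> (w < y \<and> w / (c * (y - w)) < t)"
  proof
    assume h: "w < (y - w) * (c * t)"
    then have yw: "y - w > 0" using w ct by (smt (verit) mult_nonpos_nonneg)
    then have "w / (c * (y - w)) < t" using h c by (simp add: divide_less_eq algebra_simps)
    then show "w < y \<and> w / (c * (y - w)) < t" using yw by simp
  next
    assume h: "w < y \<and> w / (c * (y - w)) < t"
    then have yw: "c * (y - w) > 0" using c by simp
    then show "w < (y - w) * (c * t)" using h by (simp add: divide_less_eq algebra_simps)
  qed
  finally show ?thesis .
qed

lemma coef_alg:
  fixes n j :: nat and w lam r :: real
  assumes j: "j < n" and w: "w > 0" and lam: "lam > 0" and r: "r > 0"
  shows "real n ^ n / fact (n - 1) * real (n - 1 choose j) * w ^ (n - 1 - j) * exp (- real n * w)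
            / real n ^ (j + 1) * (2 * sqrt (real n * w / (lam * r)) ^ (j + 1))
       = 2 * (real n * w) ^ n * exp (- real n * w) *
          ((lam * real n * r * w) powr (- (real j + 1) / 2) / (fact j * fact (n - j - 1)))"
proof -
  define p where "p = n - 1 - j"
  define q where "q = j + 1"
  have n: "n = p + q" using j by (simp add: p_def q_def)
  have n1: "n - j - 1 = p" by (simp add: p_def)
  have npos: "real n > 0" using j by simp
  define s where "s = sqrt (real n * w)"
  define t where "t = sqrt (lam * r)"
  have s: "s > 0" using npos w by (simp add: s_def)
  have t: "t > 0" using lam r by (simp add: t_def)
  have s2: "s^2 = real n * w" using npos w by (simp add: s_def)
  have t2: "t^2 = lam * r" using lam r by (simp add: t_def)
  have sq: "sqrt (real n * w / (lam * r)) = s / t" by (simp add: s_def t_def real_sqrt_divide)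
  have base: "lam * real n * r * w = (t * s)^2" using s2 t2 by (simp add: power_mult_distrib algebra_simps)
  have pw: "(lam * real n * r * w) powr (- (real j + 1) / 2) = 1 / (t * s) ^ q"
  proof -
    have "(lam * real n * r * w) powr (- (real j + 1) / 2) = ((t * s) powr 2) powr (- (real j + 1) / 2)"
      using s t by (simp add: base powr_realpow)
    also have "\<dots> = (t * s) powr (- real q)"
      by (simp add: powr_powr q_def) (rule arg_cong[where f="\<lambda>e. (t * s) powr e"], simp add: field_simps)
    also have "\<dots> = 1 / (t * s) ^ q"
      using s t by (simp add: powr_minus powr_realpow divide_inverse)
    finally show ?thesis .
  qed
  have bin: "real (n - 1 choose j) = fact (n - 1) / (fact j * fact p)"
    using j by (simp add: binomial_fact p_def)
  have key: "real n ^ n * w ^ p * (s / t) ^ q / real n ^ q = (real n * w) ^ n / (t * s) ^ q"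
  proof -
    have "s ^ q * s ^ q = (s^2) ^ q" by (simp add: power2_eq_square power_mult_distrib)
    then have sq2: "s ^ q * s ^ q = (real n * w) ^ q" by (simp only: s2)
    have "real n ^ n * w ^ p * (s / t) ^ q / real n ^ q * ((t * s) ^ q)
        = real n ^ n * w ^ p * (s ^ q * s ^ q) / real n ^ q"
      using s t by (simp add: power_divide power_mult_distrib field_simps)
    also have "\<dots> = (real n * w) ^ n"
    proof -
      have pn: "(x::real) ^ n = x ^ p * x ^ q" for x by (simp add: n power_add)
      show ?thesis unfolding sq2 pn[of "real n"] pn[of "real n * w"] using npos
        by (simp add: power_mult_distrib field_simps)
    qed
    finally show ?thesis using s t by (simp add: field_simps)
  qed
  have L: "real n ^ n / fact (n - 1) * real (n - 1 choose j) * w ^ (n - 1 - j) * exp (- real n * w)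
            / real n ^ (j + 1) * (2 * sqrt (real n * w / (lam * r)) ^ (j + 1))
     = 2 * exp (- real n * w) / (fact j * fact p) * (real n ^ n * w ^ p * (s / t) ^ q / real n ^ q)"
    unfolding bin sq p_def[symmetric] q_def[symmetric] by (simp add: field_simps)
  have R: "2 * (real n * w) ^ n * exp (- real n * w) *
          ((lam * real n * r * w) powr (- (real j + 1) / 2) / (fact j * fact (n - j - 1)))
     = 2 * exp (- real n * w) / (fact j * fact p) * ((real n * w) ^ n / (t * s) ^ q)"
    unfolding pw n1 by (simp add: field_simps)
  show ?thesis unfolding L R key ..
qed


lemma indep_lborel:
  assumes "prob_space M" "prob_space.indep_var M borel Y borel (X1 :: 'a \<Rightarrow> real)"
  shows "prob_space.indep_var M lborel (Y :: 'a \<Rightarrow> real) lborel X1"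
proof -
  have e: "(case i of True \<Rightarrow> lborel | False \<Rightarrow> lborel) = (lborel :: real measure)"
    "(case i of True \<Rightarrow> borel | False \<Rightarrow> borel) = (borel :: real measure)" for i
    by (cases i; simp)+
  show ?thesis using assms unfolding prob_space.indep_var_def[OF assms(1)] prob_space.indep_vars_def[OF assms(1)] e
    by simp
qed

theorem theorem1:
  fixes M :: "'a measure" and Y X1 :: "'a \<Rightarrow> real"
    and nS nR :: nat and \<gamma>S lam x :: real
  assumes "prob_space M"
    and "nS \<ge> 1" and "nR \<ge> 1" and "\<gamma>S > 0" and "lam > 0"
    and "distributed M lborel Y
           (\<lambda>y. ennreal (if y > 0 then real nS ^ nS / fact (nS - 1) * y ^ (nS - 1) * exp (- real nS * y) else 0))"
    and "distributed M lborel X1 (\<lambda>t. ennreal (if t > 0 then exp (- t) else 0))"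
    and "prob_space.indep_var M borel Y borel X1"
    and "x > 0"
  shows "let V = (\<lambda>\<omega>. real nR * lam * X1 \<omega>);
             \<gamma>D = (\<lambda>\<omega>. \<gamma>S * Y \<omega> * real nR * (V \<omega> / (1 + V \<omega>)));
             w = x / (real nR * \<gamma>S)
         in measure M {\<omega> \<in> space M. \<gamma>D \<omega> \<le> x} =
            1 - 2 * (real nS * w) ^ nS * exp (- real nS * w) *
              (\<Sum>m<nS. (lam * real nS * real nR * w) powr (- (real m + 1) / 2)
                         / (fact m * fact (nS - m - 1))
                         * besselK (real m + 1) (2 * sqrt (real nS * w / (lam * real nR))))"
proof -
  interpret prob_space M by fact
  define f where "f = (\<lambda>y::real. if y > 0 then real nS ^ nS / fact (nS - 1) * y ^ (nS - 1) * exp (- real nS * y) else 0)"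
  define g where "g = (\<lambda>t::real. if t > 0 then exp (- t) else 0)"
  have fm[measurable]: "f \<in> borel_measurable borel" unfolding f_def by measurable
  have gm[measurable]: "g \<in> borel_measurable borel" unfolding g_def by measurable
  have Yd: "distributed M lborel Y (\<lambda>y. ennreal (f y))" using assms(6) unfolding f_def .
  have Xd: "distributed M lborel X1 (\<lambda>t. ennreal (g t))" using assms(7) unfolding g_def .
  have ind: "indep_var lborel Y lborel X1" using indep_lborel[OF assms(1) assms(8)] .
  have J: "distributed M (lborel \<Otimes>\<^sub>M lborel) (\<lambda>\<omega>. (Y \<omega>, X1 \<omega>)) (\<lambda>(y,t). ennreal (f y) * ennreal (g t))"
    by (rule distributed_joint_indep[OF _ _ Yd Xd ind]) (simp_all add: lborel.sigma_finite_measure_axioms)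
  define c where "c = real nR * lam"
  define w where "w = x / (real nR * \<gamma>S)"
  have c: "c > 0" using assms by (simp add: c_def)
  have w: "w > 0" using assms by (simp add: w_def)
  define B where "B = {p :: real \<times> real. x < \<gamma>S * fst p * real nR * (real nR * lam * snd p / (1 + real nR * lam * snd p))}"
  have Bm[measurable]: "B \<in> sets (lborel \<Otimes>\<^sub>M lborel)"
  proof -
    have "B = {p \<in> space (lborel \<Otimes>\<^sub>M lborel). x < \<gamma>S * fst p * real nR * (real nR * lam * snd p / (1 + real nR * lam * snd p))}"
      by (auto simp: B_def space_pair_measure)
    also have "\<dots> \<in> sets (lborel \<Otimes>\<^sub>M lborel)" by measurable
    finally show ?thesis .
  qed
  have Zm: "(\<lambda>\<omega>. (Y \<omega>, X1 \<omega>)) \<in> measurable M (lborel \<Otimes>\<^sub>M lborel)" using J by (rule distributed_measurable)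
  define A where "A = (\<lambda>\<omega>. (Y \<omega>, X1 \<omega>)) -` B \<inter> space M"
  have Aev: "A \<in> events" using measurable_sets[OF Zm Bm] by (simp add: A_def)
  have seteq: "{\<omega> \<in> space M. \<gamma>S * Y \<omega> * real nR * (real nR * lam * X1 \<omega> / (1 + real nR * lam * X1 \<omega>)) \<le> x} = space M - A"
    by (auto simp: A_def B_def)

  define C where "C = real nS ^ nS / fact (nS - 1)"
  define D where "D = (\<lambda>j. C * real (nS - 1 choose j) * w ^ (nS - 1 - j) * exp (- real nS * w))"
  have Dnn: "D j \<ge> 0" for j using w by (simp add: D_def C_def)
  define b where "b = real nS * w / (lam * real nR)"
  have b: "b > 0" using w assms by (simp add: b_def)
  define K' where "K' = (\<lambda>j::nat. \<integral>\<^sup>+s. ennreal (exp (- (2 * sqrt b) * cosh s) * cosh ((real j + 1) * s)) * indicator {0..} s \<partial>lborel)"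
  define E where "E = (\<lambda>j. D j / real nS ^ (j+1) * (2 * sqrt b ^ (j+1)))"
  define I where "I = (\<lambda>j::nat. \<integral>\<^sup>+u. ennreal (u ^ j * exp (- real nS * u - (w / c) / u)) * indicator {0<..} u \<partial>lborel)"
  define F where "F = (\<lambda>y. if w < y then f y * exp (- (w / (c * (y - w)))) else 0)"
  have Fm[measurable]: "F \<in> borel_measurable borel" unfolding F_def by measurable
  have pt: "ennreal (g t) * indicator B (y, t) = (if w < y then ennreal (g t) * indicator {w / (c * (y - w))<..} t else 0)" for y t
  proof (cases "t > 0")
    case True
    have "(x < \<gamma>S * y * real nR * (real nR * lam * t / (1 + real nR * lam * t))) \<longleftrightarrow> (w < y * (c * t / (1 + c * t)))"
      using assms by (simp add: w_def c_def field_simps)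
    also have "\<dots> \<longleftrightarrow> (w < y \<and> w / (c * (y - w)) < t)" by (rule cond_equiv[OF True w c])
    finally show ?thesis by (auto simp: B_def indicator_def)
  next
    case False then show ?thesis by (simp add: g_def)
  qed
  have "emeasure M A = (\<integral>\<^sup>+p. (\<lambda>(y,t). ennreal (f y) * ennreal (g t)) p * indicator B p \<partial>(lborel \<Otimes>\<^sub>M lborel))"
    unfolding A_def by (rule distributed_emeasure[OF J Bm])
  also have "\<dots> = (\<integral>\<^sup>+y. \<integral>\<^sup>+t. (\<lambda>(y,t). ennreal (f y) * ennreal (g t)) (y, t) * indicator B (y, t) \<partial>lborel \<partial>lborel)"
    by (rule lborel.nn_integral_fst[symmetric]) measurable
  also have "\<dots> = (\<integral>\<^sup>+y. ennreal (F y) \<partial>lborel)"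
  proof (intro nn_integral_cong)
    fix y :: real
    have "(\<integral>\<^sup>+t. (\<lambda>(y,t). ennreal (f y) * ennreal (g t)) (y, t) * indicator B (y, t) \<partial>lborel)
       = (\<integral>\<^sup>+t. ennreal (f y) * (ennreal (g t) * indicator B (y, t)) \<partial>lborel)"
      by (simp add: mult.assoc)
    also have "\<dots> = ennreal (f y) * (\<integral>\<^sup>+t. ennreal (g t) * indicator B (y, t) \<partial>lborel)"
      by (rule nn_integral_cmult) measurable
    also have "(\<integral>\<^sup>+t. ennreal (g t) * indicator B (y, t) \<partial>lborel) = (if w < y then ennreal (exp (- (w / (c * (y - w))))) else 0)"
    proof (cases "w < y")
      case True
      then have "(\<integral>\<^sup>+t. ennreal (g t) * indicator B (y, t) \<partial>lborel) = (\<integral>\<^sup>+t. ennreal (g t) * indicator {w / (c * (y - w))<..} t \<partial>lborel)"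
        by (simp add: pt)
      also have "\<dots> = ennreal (exp (- (w / (c * (y - w)))))"
        unfolding g_def by (rule exp_tail_nn) (use True w c in simp)
      finally show ?thesis using True by simp
    next
      case False then show ?thesis by (simp add: pt)
    qed
    also have "ennreal (f y) * (if w < y then ennreal (exp (- (w / (c * (y - w))))) else 0) = ennreal (F y)"
      by (simp add: F_def f_def ennreal_mult'' [symmetric] ennreal_mult [symmetric])
    finally show "(\<integral>\<^sup>+t. (\<lambda>(y,t). ennreal (f y) * ennreal (g t)) (y, t) * indicator B (y, t) \<partial>lborel) = ennreal (F y)" .
  qed
  also have "\<dots> = (\<integral>\<^sup>+u. ennreal (F (w + 1 * u)) \<partial>lborel)"
    using nn_integral_real_affine[where c=1 and t=w and f="\<lambda>y. ennreal (F y)"] by simp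
  also have "\<dots> = (\<integral>\<^sup>+u. (\<Sum>j\<in>{..nS-1}. ennreal (D j) * (ennreal (u ^ j * exp (- real nS * u - (w / c) / u)) * indicator {0<..} u)) \<partial>lborel)"
  proof (intro nn_integral_cong)
    fix u :: real
    show "ennreal (F (w + 1 * u)) = (\<Sum>j\<in>{..nS-1}. ennreal (D j) * (ennreal (u ^ j * exp (- real nS * u - (w / c) / u)) * indicator {0<..} u))"
    proof (cases "u > 0")
      case True
      have "F (w + 1 * u) = C * (u + w) ^ (nS - 1) * (exp (- real nS * w) * exp (- real nS * u - (w / c) / u))"
        using True w c by (simp add: F_def f_def C_def field_simps flip: exp_add)
      also have "\<dots> = (\<Sum>j\<in>{..nS-1}. D j * (u ^ j * exp (- real nS * u - (w / c) / u)))"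
        unfolding binomial_ring D_def by (simp add: sum_distrib_left sum_distrib_right mult_ac)
      finally have "ennreal (F (w + 1 * u)) = (\<Sum>j\<in>{..nS-1}. ennreal (D j * (u ^ j * exp (- real nS * u - (w / c) / u))))"
        using True Dnn by (simp add: sum_nonneg)
      then show ?thesis using True Dnn by (simp add: ennreal_mult)
    next
      case False
      then show ?thesis by (simp add: F_def)
    qed
  qed
  also have "\<dots> = (\<Sum>j\<in>{..nS-1}. ennreal (D j) * I j)"
    unfolding I_def
    by (subst nn_integral_sum) (auto intro!: sum.cong nn_integral_cmult)

  also have "\<dots> = (\<Sum>j\<in>{..nS-1}. ennreal (D j) * (ennreal (1 / real nS ^ (j+1)) * (ennreal (2 * sqrt b ^ (j+1)) * K' j)))"
  proof (intro sum.cong refl arg_cong2[where f="(*)"])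
    fix j assume "j \<in> {..nS-1}"
    have nS: "real nS > 0" using assms by simp
    have "I j = ennreal \<bar>1 / real nS\<bar> * (\<integral>\<^sup>+v. ennreal ((0 + 1 / real nS * v) ^ j * exp (- real nS * (0 + 1 / real nS * v) - (w / c) / (0 + 1 / real nS * v))) * indicator {0<..} (0 + 1 / real nS * v) \<partial>lborel)"
      unfolding I_def using nS
      by (intro nn_integral_real_affine) auto
    also have "(\<integral>\<^sup>+v. ennreal ((0 + 1 / real nS * v) ^ j * exp (- real nS * (0 + 1 / real nS * v) - (w / c) / (0 + 1 / real nS * v))) * indicator {0<..} (0 + 1 / real nS * v) \<partial>lborel)
       = (\<integral>\<^sup>+v. ennreal (1 / real nS ^ j) * (ennreal (v ^ j * exp (- v - b / v)) * indicator {0<..} v) \<partial>lborel)"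
    proof (intro nn_integral_cong)
      fix v :: real
      have e1: "(0 + 1 / real nS * v) ^ j * exp (- real nS * (0 + 1 / real nS * v) - (w / c) / (0 + 1 / real nS * v))
          = 1 / real nS ^ j * (v ^ j * exp (- v - b / v))"
        using nS by (simp add: b_def c_def power_divide field_simps)
      have e2: "ennreal (1 / real nS ^ j * (v ^ j * exp (- v - b / v))) = ennreal (1 / real nS ^ j) * ennreal (v ^ j * exp (- v - b / v))"
        by (rule ennreal_mult') simp
      have e3: "indicator {0<..} (0 + 1 / real nS * v) = (indicator {0<..} v :: ennreal)"
        using nS by (simp add: indicator_def zero_less_divide_iff)
      show "ennreal ((0 + 1 / real nS * v) ^ j * exp (- real nS * (0 + 1 / real nS * v) - (w / c) / (0 + 1 / real nS * v))) * indicator {0<..} (0 + 1 / real nS * v)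
         = ennreal (1 / real nS ^ j) * (ennreal (v ^ j * exp (- v - b / v)) * indicator {0<..} v)"
        unfolding e1 e2 e3 by (simp only: mult.assoc)
    qed
    also have "\<dots> = ennreal (1 / real nS ^ j) * (\<integral>\<^sup>+v. ennreal (v ^ j * exp (- v - b / v)) * indicator {0<..} v \<partial>lborel)"
      by (rule nn_integral_cmult) measurable
    also have "(\<integral>\<^sup>+v. ennreal (v ^ j * exp (- v - b / v)) * indicator {0<..} v \<partial>lborel) = ennreal (2 * sqrt b ^ (j+1)) * K' j"
      unfolding K'_def by (rule bessel_nn[OF b])
    finally have calc: "I j = ennreal \<bar>1 / real nS\<bar> * (ennreal (1 / real nS ^ j) * (ennreal (2 * sqrt b ^ (j+1)) * K' j))" .
    have ab: "ennreal \<bar>1 / real nS\<bar> * ennreal (1 / real nS ^ j) = ennreal (1 / real nS ^ (j+1))"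
      using nS by (simp add: ennreal_mult'[symmetric])
    show "I j = ennreal (1 / real nS ^ (j+1)) * (ennreal (2 * sqrt b ^ (j+1)) * K' j)"
      using calc ab by (metis mult.assoc)
  qed

  also have "\<dots> = (\<Sum>j\<in>{..nS-1}. ennreal (E j) * K' j)"
  proof (intro sum.cong refl)
    fix j assume "j \<in> {..nS-1}"
    have "ennreal (E j) = ennreal (D j) * (ennreal (1 / real nS ^ (j+1)) * ennreal (2 * sqrt b ^ (j+1)))"
      unfolding E_def using Dnn[of j] b by (simp add: ennreal_mult'[symmetric] divide_inverse)
    then show "ennreal (D j) * (ennreal (1 / real nS ^ (j+1)) * (ennreal (2 * sqrt b ^ (j+1)) * K' j)) = ennreal (E j) * K' j"
      by (simp add: mult.assoc)
  qed
  finally have mA: "emeasure M A = (\<Sum>j\<in>{..nS-1}. ennreal (E j) * K' j)" .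
  have Epos: "E j > 0" if "j \<in> {..nS-1}" for j
    using that w b assms by (simp add: E_def D_def C_def)
  have fin: "K' j < top" if j: "j \<in> {..nS-1}" for j
  proof -
    have "emeasure M A \<noteq> top" by simp
    then have "ennreal (E j) * K' j \<noteq> top" using j unfolding mA by simp
    then show ?thesis using Epos[OF j] by (auto simp: ennreal_mult_eq_top_iff top.not_eq_extremum)
  qed
  have coshpos: "cosh (u::real) > 0" for u by (simp add: cosh_def add_pos_pos)
  have Kb0: "besselK (real j + 1) (2 * sqrt b) = enn2real (K' j)" for j
  proof -
    have "besselK (real j + 1) (2 * sqrt b) = enn2real (\<integral>\<^sup>+t. ennreal (indicator {0..} t *\<^sub>R (exp (- (2 * sqrt b) * cosh t) * cosh ((real j + 1) * t))) \<partial>lborel)"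
      unfolding besselK_def set_lebesgue_integral_def
      by (rule integral_eq_nn_integral) (auto simp: indicator_def intro!: mult_nonneg_nonneg less_imp_le[OF coshpos])
    also have "(\<integral>\<^sup>+t. ennreal (indicator {0..} t *\<^sub>R (exp (- (2 * sqrt b) * cosh t) * cosh ((real j + 1) * t))) \<partial>lborel) = K' j"
      unfolding K'_def by (intro nn_integral_cong) (auto simp: indicator_def)
    finally show ?thesis .
  qed
  have Kb: "K' j = ennreal (besselK (real j + 1) (2 * sqrt b))" if j: "j \<in> {..nS-1}" for j
    using fin[OF j] Kb0[of j] by simp
  have Kbnn: "besselK (real j + 1) (2 * sqrt b) \<ge> 0" for j
    using Kb0[of j] by simp
  have mA1: "emeasure M A = ennreal (\<Sum>j\<in>{..nS-1}. E j * besselK (real j + 1) (2 * sqrt b))"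
    unfolding mA using Epos Kbnn Kb
    by (subst sum_ennreal[symmetric]) (auto intro!: sum.cong simp: ennreal_mult' less_imp_le)
  then have mA2: "measure M A = (\<Sum>j\<in>{..nS-1}. E j * besselK (real j + 1) (2 * sqrt b))"
  proof -
    have nn: "0 \<le> (\<Sum>j\<in>{..nS-1}. E j * besselK (real j + 1) (2 * sqrt b))"
      using Epos Kbnn by (intro sum_nonneg) (auto intro: mult_nonneg_nonneg less_imp_le)
    show ?thesis using mA1 nn by (simp add: emeasure_eq_measure)
  qed

  have pc: "measure M {\<omega> \<in> space M. \<gamma>S * Y \<omega> * real nR * (real nR * lam * X1 \<omega> / (1 + real nR * lam * X1 \<omega>)) \<le> x} = 1 - measure M A"
    unfolding seteq by (rule prob_compl[OF Aev])
  have idx: "{..nS-1} = {..<nS}" using assms(2) by auto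
  have Ej: "E j = 2 * (real nS * w) ^ nS * exp (- real nS * w) * ((lam * real nS * real nR * w) powr (- (real j + 1) / 2) / (fact j * fact (nS - j - 1)))"
    if "j < nS" for j
    unfolding E_def D_def C_def b_def by (rule coef_alg) (use that w assms in auto)
  have sumeq: "(\<Sum>j\<in>{..nS-1}. E j * besselK (real j + 1) (2 * sqrt b))
      = 2 * (real nS * w) ^ nS * exp (- real nS * w) *
        (\<Sum>m<nS. (lam * real nS * real nR * w) powr (- (real m + 1) / 2) / (fact m * fact (nS - m - 1)) * besselK (real m + 1) (2 * sqrt b))"
    unfolding idx sum_distrib_left by (rule sum.cong) (simp_all add: Ej mult.assoc)
  show ?thesis
    unfolding Let_def w_def[symmetric] b_def[symmetric] pc mA2 sumeq ..
qed

end
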